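(* Let $p$ be a prime, $d\ge1$, $g\in L^2(\mathbb{Z}_p^d)$ with $\|g\|_2=1$, and $A,B\subseteq\mathbb{Z}_p^d$. Let $E=\operatorname{supp}(g)=\{x: g(x)\neq 0\}$ and assume $|E|=|B|$. Then the Gabor system $\mathcal{G}(g,A,B)$ is an orthonormal basis of $L^2(\mathbb{Z}_p^d)$ if and only if all of the following hold: (i) $|g|=|E|^{-1/2}1_E$; (ii) $(E,B)$ is a spectral pair; (iii) $(E,A)$ is a tiling pair.
   Context: $\mathbb{Z}_p$ is the field of integers mod a prime $p$, $\mathbb{Z}_p^d$ the $d$-dimensional vector space over it, and $x\cdot b=\sum_i x_ib_i$. $\chi(t)=e^{2\pi i t/p}$ for $t\in\mathbb{Z}_p$. $L^2(\mathbb{Z}_p^d)$ is the space of functions $\mathbb{Z}_p^d\to\mathbb{C}$ with inner product $\langle f,h\rangle=\sum_{x\in\mathbb{Z}_p^d} f(x)\overline{h(x)}$ (counting measure). For $g\in L^2(\mathbb{Z}_p^d)$ and $A,B\subseteq\mathbb{Z}_p^d$, the Gabor system is $\mathcal{G}(g,A,B)=\{x\mapsto g(x-a)\chi(x\cdot b)\}_{a\in A,\ b\in B}$ (indexed by pairs $(a,b)$). $1_E$ denotes the indicator function of $E$. A pair $(E,B)$ is a spectral pair if the functions $\{x\mapsto\chi(x\cdot b)\}_{b\in B}$, restricted to $E$, form an orthogonal basis of $L^2(E)$. A pair $(E,A)$ is a tiling pair if $\sum_{a\in A}1_E(x-a)=1$ for all $x\in\mathbb{Z}_p^d$. *)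

theory Defs
  imports "HOL-Analysis.Analysis"
begin

text \<open>Points of Z_p^d are modelled as functions nat => int whose first d
coordinates lie in {0..<p} and whose remaining coordinates are 0.\<close>

definition zp_vecs :: "nat \<Rightarrow> nat \<Rightarrow> (nat \<Rightarrow> int) set" where
  "zp_vecs p d = {x. (\<forall>i<d. 0 \<le> x i \<and> x i < int p) \<and> (\<forall>i\<ge>d. x i = 0)}"

definition vsub :: "nat \<Rightarrow> (nat \<Rightarrow> int) \<Rightarrow> (nat \<Rightarrow> int) \<Rightarrow> (nat \<Rightarrow> int)" where
  "vsub p x a = (\<lambda>i. (x i - a i) mod int p)"

definition dotp :: "nat \<Rightarrow> (nat \<Rightarrow> int) \<Rightarrow> (nat \<Rightarrow> int) \<Rightarrow> int" where
  "dotp d x b = (\<Sum>i<d. x i * b i)"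

definition chi :: "nat \<Rightarrow> int \<Rightarrow> complex" where
  "chi p t = cis (2 * pi * of_int t / of_nat p)"

definition ip :: "(nat \<Rightarrow> int) set \<Rightarrow> ((nat \<Rightarrow> int) \<Rightarrow> complex) \<Rightarrow> ((nat \<Rightarrow> int) \<Rightarrow> complex) \<Rightarrow> complex" where
  "ip S f h = (\<Sum>x\<in>S. f x * cnj (h x))"

definition gabor_atom :: "nat \<Rightarrow> nat \<Rightarrow> ((nat \<Rightarrow> int) \<Rightarrow> complex) \<Rightarrow> (nat \<Rightarrow> int) \<Rightarrow> (nat \<Rightarrow> int) \<Rightarrow> ((nat \<Rightarrow> int) \<Rightarrow> complex)" where
  "gabor_atom p d g a b = (\<lambda>x. g (vsub p x a) * chi p (dotp d x b))"

definition is_onb :: "(nat \<Rightarrow> int) set \<Rightarrow> 'i set \<Rightarrow> ('i \<Rightarrow> (nat \<Rightarrow> int) \<Rightarrow> complex) \<Rightarrow> bool" where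
  "is_onb S I F \<longleftrightarrow>
     (\<forall>i\<in>I. \<forall>j\<in>I. ip S (F i) (F j) = (if i = j then 1 else 0)) \<and>
     (\<forall>f. \<exists>c. \<forall>x\<in>S. f x = (\<Sum>i\<in>I. c i * F i x))"

definition is_ob :: "(nat \<Rightarrow> int) set \<Rightarrow> 'i set \<Rightarrow> ('i \<Rightarrow> (nat \<Rightarrow> int) \<Rightarrow> complex) \<Rightarrow> bool" where
  "is_ob S I F \<longleftrightarrow>
     (\<forall>i\<in>I. ip S (F i) (F i) \<noteq> 0) \<and>
     (\<forall>i\<in>I. \<forall>j\<in>I. i \<noteq> j \<longrightarrow> ip S (F i) (F j) = 0) \<and>
     (\<forall>f. \<exists>c. \<forall>x\<in>S. f x = (\<Sum>i\<in>I. c i * F i x))"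

definition spectral_pair :: "nat \<Rightarrow> nat \<Rightarrow> (nat \<Rightarrow> int) set \<Rightarrow> (nat \<Rightarrow> int) set \<Rightarrow> bool" where
  "spectral_pair p d E B \<longleftrightarrow> is_ob E B (\<lambda>b x. chi p (dotp d x b))"

definition tiling_pair :: "nat \<Rightarrow> nat \<Rightarrow> (nat \<Rightarrow> int) set \<Rightarrow> (nat \<Rightarrow> int) set \<Rightarrow> bool" where
  "tiling_pair p d E A \<longleftrightarrow>
     (\<forall>x\<in>zp_vecs p d. (\<Sum>a\<in>A. indicator E (vsub p x a) :: real) = 1)"

end

theory Submission
  imports Defs
begin


definition vadd :: "nat \<Rightarrow> (nat \<Rightarrow> int) \<Rightarrow> (nat \<Rightarrow> int) \<Rightarrow> (nat \<Rightarrow> int)" where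
  "vadd p x a = (\<lambda>i. (x i + a i) mod int p)"

lemma zp_finite: "finite (zp_vecs p d)"
proof -
  have "zp_vecs p d \<subseteq> (\<lambda>f i. if i < d then f i else 0) ` (PiE {..<d} (\<lambda>_. {0..<int p}))"
  proof
    fix x assume x: "x \<in> zp_vecs p d"
    let ?f = "restrict x {..<d}"
    have "?f \<in> PiE {..<d} (\<lambda>_. {0..<int p})" using x by (auto simp: zp_vecs_def)
    moreover have "x = (\<lambda>i. if i < d then ?f i else 0)" using x by (auto simp: zp_vecs_def fun_eq_iff)
    ultimately show "x \<in> (\<lambda>f i. if i < d then f i else 0) ` (PiE {..<d} (\<lambda>_. {0..<int p}))" by blast
  qed
  thus ?thesis by (rule finite_subset) (auto intro: finite_PiE)
qed

lemma vsub_Z: "p > 0 \<Longrightarrow> x \<in> zp_vecs p d \<Longrightarrow> a \<in> zp_vecs p d \<Longrightarrow> vsub p x a \<in> zp_vecs p d"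
  by (auto simp: zp_vecs_def vsub_def)

lemma vadd_Z: "p > 0 \<Longrightarrow> x \<in> zp_vecs p d \<Longrightarrow> a \<in> zp_vecs p d \<Longrightarrow> vadd p x a \<in> zp_vecs p d"
  by (auto simp: zp_vecs_def vadd_def)

lemma Z_mod: "x \<in> zp_vecs p d \<Longrightarrow> x i mod int p = x i"
  by (cases "i < d") (auto simp: zp_vecs_def)

lemma vsub_vadd: "x \<in> zp_vecs p d \<Longrightarrow> vsub p (vadd p x a) a = x"
  by (auto simp: vsub_def vadd_def fun_eq_iff mod_diff_left_eq Z_mod)

lemma vadd_vsub: "y \<in> zp_vecs p d \<Longrightarrow> vadd p (vsub p y a) a = y"
  by (auto simp: vsub_def vadd_def fun_eq_iff mod_add_left_eq Z_mod)

lemma sum_shift: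
  assumes "p > 0" "a \<in> zp_vecs p d"
  shows "(\<Sum>y\<in>zp_vecs p d. F y) = (\<Sum>x\<in>zp_vecs p d. F (vadd p x a))"
  by (rule sum.reindex_bij_witness[of _ "\<lambda>x. vadd p x a" "\<lambda>y. vsub p y a"])
     (use assms in \<open>auto simp: vsub_vadd vadd_vsub vsub_Z vadd_Z\<close>)

lemma chi_add: "chi p (s + t) = chi p s * chi p t"
  by (simp add: chi_def cis_mult add_divide_distrib distrib_left)

lemma chi_mult_p: "p > 0 \<Longrightarrow> chi p (int p * k) = 1"
proof -
  assume "p > 0"
  hence "2 * pi * of_int (int p * k) / of_nat p = 2 * pi * of_int k" by simp
  thus ?thesis unfolding chi_def by simp
qed

lemma cmod_chi[simp]: "cmod (chi p t) = 1"
  by (simp add: chi_def)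

lemma chi_cnj_self[simp]: "chi p t * cnj (chi p t) = 1"
  using complex_norm_square[of "chi p t"] by simp

lemma chi_dot_vadd:
  assumes "p > 0"
  shows "chi p (dotp d (vadd p x a) b) = chi p (dotp d x b) * chi p (dotp d a b)"
proof -
  have e: "dotp d (vadd p x a) b = dotp d x b + dotp d a b + int p * (\<Sum>i<d. - ((x i + a i) div int p) * b i)"
    unfolding dotp_def vadd_def sum_distrib_left sum.distrib[symmetric]
  proof (rule sum.cong[OF refl])
    fix i
    have h: "(x i + a i) mod int p = x i + a i - int p * ((x i + a i) div int p)"
      by (simp add: minus_div_mult_eq_mod[symmetric] algebra_simps)
    show "(x i + a i) mod int p * b i = x i * b i + a i * b i + int p * (- ((x i + a i) div int p) * b i)"
      by (subst h) (simp add: algebra_simps)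
  qed
  show ?thesis unfolding e chi_add chi_mult_p[OF assms] by simp
qed



lemma L_ip:
  assumes p: "p > 0" and a: "a \<in> zp_vecs p d" and EZ: "E \<subseteq> zp_vecs p d"
    and gsq: "\<forall>x\<in>zp_vecs p d. (cmod (g x))\<^sup>2 = (if x \<in> E then 1 / real (card E) else 0)"
  shows "ip (zp_vecs p d) (gabor_atom p d g a b) (gabor_atom p d g a b') =
     (chi p (dotp d a b) * cnj (chi p (dotp d a b'))) * of_real (1 / real (card E)) *
       ip E (\<lambda>x. chi p (dotp d x b)) (\<lambda>x. chi p (dotp d x b'))"
proof -
  let ?Z = "zp_vecs p d"
  let ?ph = "chi p (dotp d a b) * cnj (chi p (dotp d a b'))"
  let ?h = "\<lambda>x. chi p (dotp d x b) * cnj (chi p (dotp d x b'))"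
  have "ip ?Z (gabor_atom p d g a b) (gabor_atom p d g a b') =
        (\<Sum>x\<in>?Z. g (vsub p (vadd p x a) a) * chi p (dotp d (vadd p x a) b) *
            cnj (g (vsub p (vadd p x a) a) * chi p (dotp d (vadd p x a) b')))"
    unfolding ip_def gabor_atom_def by (rule sum_shift[OF p a])
  also have "\<dots> = (\<Sum>x\<in>?Z. (if x \<in> E then ?ph * of_real (1 / real (card E)) * ?h x else 0))"
  proof (rule sum.cong[OF refl])
    fix x assume x: "x \<in> ?Z"
    have "g (vsub p (vadd p x a) a) * chi p (dotp d (vadd p x a) b) *
            cnj (g (vsub p (vadd p x a) a) * chi p (dotp d (vadd p x a) b'))
        = (g x * cnj (g x)) * ?ph * ?h x"
      by (simp add: vsub_vadd[OF x] chi_dot_vadd[OF p] algebra_simps)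
    also have "g x * cnj (g x) = of_real (if x \<in> E then 1 / real (card E) else 0)"
      using gsq x complex_norm_square[of "g x"] by simp
    finally show "g (vsub p (vadd p x a) a) * chi p (dotp d (vadd p x a) b) *
            cnj (g (vsub p (vadd p x a) a) * chi p (dotp d (vadd p x a) b'))
        = (if x \<in> E then ?ph * of_real (1 / real (card E)) * ?h x else 0)"
      by (simp add: algebra_simps)
  qed
  also have "\<dots> = (\<Sum>x\<in>E. ?ph * of_real (1 / real (card E)) * ?h x)"
    using EZ zp_finite[of p d] by (simp add: sum.If_cases Int_absorb1)
  also have "\<dots> = ?ph * of_real (1 / real (card E)) * ip E (\<lambda>x. chi p (dotp d x b)) (\<lambda>x. chi p (dotp d x b'))"
    unfolding ip_def by (simp add: sum_distrib_left)
  finally show ?thesis .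
qed

lemma tile_unique:
  assumes T: "tiling_pair p d E A" and fA: "finite A"
    and y: "y \<in> zp_vecs p d" and a: "a \<in> A" and a': "a' \<in> A"
    and e: "vsub p y a \<in> E" and e': "vsub p y a' \<in> E"
  shows "a = a'"
proof (rule ccontr)
  assume ne: "a \<noteq> a'"
  have "(\<Sum>c\<in>{a,a'}. indicator E (vsub p y c) :: real) \<le> (\<Sum>c\<in>A. indicator E (vsub p y c))"
    by (rule sum_mono2) (use fA a a' in auto)
  moreover have "(\<Sum>c\<in>{a,a'}. indicator E (vsub p y c) :: real) = 2"
    using ne e e' by simp
  moreover have "(\<Sum>c\<in>A. indicator E (vsub p y c) :: real) = 1"
    using T y unfolding tiling_pair_def by blast
  ultimately show False by simp
qed

lemma tile_exists:
  assumes T: "tiling_pair p d E A" and y: "y \<in> zp_vecs p d"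
  shows "\<exists>a\<in>A. vsub p y a \<in> E"
proof (rule ccontr)
  assume "\<not> ?thesis"
  hence "(\<Sum>c\<in>A. indicator E (vsub p y c) :: real) = 0" by (auto intro: sum.neutral)
  moreover have "(\<Sum>c\<in>A. indicator E (vsub p y c) :: real) = 1"
    using T y unfolding tiling_pair_def by blast
  ultimately show False by simp
qed



lemma dir_back:
  assumes p: "p > 0" and AZ: "A \<subseteq> zp_vecs p d" and BZ: "B \<subseteq> zp_vecs p d"
    and Edef: "E = {x \<in> zp_vecs p d. g x \<noteq> 0}" and cE: "card E > 0"
    and H1: "\<forall>x\<in>zp_vecs p d. cmod (g x) = (if x \<in> E then 1 / sqrt (real (card E)) else 0)"
    and H2: "spectral_pair p d E B" and H3: "tiling_pair p d E A"
  shows "is_onb (zp_vecs p d) (A \<times> B) (\<lambda>(a, b). gabor_atom p d g a b)"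
proof -
  let ?Z = "zp_vecs p d"
  have fZ: "finite ?Z" by (rule zp_finite)
  have fA: "finite A" using AZ fZ finite_subset by blast
  have fB: "finite B" using BZ fZ finite_subset by blast
  have EZ: "E \<subseteq> ?Z" using Edef by auto
  have gz: "\<And>x. x \<in> ?Z \<Longrightarrow> x \<notin> E \<Longrightarrow> g x = 0" using Edef by auto
  have gnz: "\<And>x. x \<in> E \<Longrightarrow> g x \<noteq> 0" using Edef by auto
  have gsq: "\<forall>x\<in>?Z. (cmod (g x))\<^sup>2 = (if x \<in> E then 1 / real (card E) else 0)"
    using H1 by (simp add: power_divide)
  from H2 have orthE: "\<And>b b'. b \<in> B \<Longrightarrow> b' \<in> B \<Longrightarrow> b \<noteq> b' \<Longrightarrow>
      ip E (\<lambda>x. chi p (dotp d x b)) (\<lambda>x. chi p (dotp d x b')) = 0"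
    and spanE: "\<And>f. \<exists>c. \<forall>x\<in>E. f x = (\<Sum>b\<in>B. c b * chi p (dotp d x b))"
    unfolding spectral_pair_def is_ob_def by blast+
  have orth: "ip ?Z (gabor_atom p d g a b) (gabor_atom p d g a' b') = (if (a, b) = (a', b') then 1 else 0)"
    if a: "a \<in> A" and b: "b \<in> B" and a': "a' \<in> A" and b': "b' \<in> B" for a b a' b'
  proof (cases "a = a'")
    case False
    have "ip ?Z (gabor_atom p d g a b) (gabor_atom p d g a' b') = 0"
      unfolding ip_def gabor_atom_def
    proof (rule sum.neutral, rule ballI)
      fix y assume y: "y \<in> ?Z"
      have "g (vsub p y a) = 0 \<or> g (vsub p y a') = 0"
        using tile_unique[OF H3 fA y a a'] False gz vsub_Z[OF p y] a a' AZ by blast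
      thus "g (vsub p y a) * chi p (dotp d y b) * cnj (g (vsub p y a') * chi p (dotp d y b')) = 0"
        by auto
    qed
    thus ?thesis using False by simp
  next
    case True
    have aZ: "a \<in> ?Z" using a AZ by auto
    note L = L_ip[OF p aZ EZ gsq, of b b']
    show ?thesis
    proof (cases "b = b'")
      case True
      have "ip E (\<lambda>x. chi p (dotp d x b)) (\<lambda>x. chi p (dotp d x b)) = of_nat (card E)"
        unfolding ip_def by simp
      thus ?thesis using L True \<open>a = a'\<close> cE by simp
    next
      case False
      thus ?thesis using L orthE[OF b b' False] \<open>a = a'\<close> by simp
    qed
  qed
  have span: "\<exists>c. \<forall>x\<in>?Z. f x = (\<Sum>i\<in>A \<times> B. c i * (case i of (a, b) \<Rightarrow> gabor_atom p d g a b) x)" for f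
  proof -
    have "\<forall>a. \<exists>c. \<forall>x\<in>E. f (vadd p x a) / g x = (\<Sum>b\<in>B. c b * chi p (dotp d x b))"
    proof
      fix a show "\<exists>c. \<forall>x\<in>E. f (vadd p x a) / g x = (\<Sum>b\<in>B. c b * chi p (dotp d x b))"
        using spanE[of "\<lambda>x. f (vadd p x a) / g x"] by simp
    qed
    then obtain C where C: "\<And>a x. x \<in> E \<Longrightarrow> f (vadd p x a) / g x = (\<Sum>b\<in>B. C a b * chi p (dotp d x b))"
      by metis
    define c where "c = (\<lambda>(a, b). C a b * cnj (chi p (dotp d a b)))"
    have "f y = (\<Sum>i\<in>A \<times> B. c i * (case i of (a, b) \<Rightarrow> gabor_atom p d g a b) y)" if y: "y \<in> ?Z" for y
    proof -
      obtain a0 where a0: "a0 \<in> A" and e0: "vsub p y a0 \<in> E" using tile_exists[OF H3 y] by blast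
      define x where "x = vsub p y a0"
      have xE: "x \<in> E" using e0 x_def by simp
      have yx: "y = vadd p x a0" using vadd_vsub[OF y] x_def by simp
      have "(\<Sum>i\<in>A \<times> B. c i * (case i of (a, b) \<Rightarrow> gabor_atom p d g a b) y)
          = (\<Sum>a\<in>A. \<Sum>b\<in>B. c (a, b) * gabor_atom p d g a b y)"
        by (simp add: sum.cartesian_product split_def)
      also have "\<dots> = (\<Sum>b\<in>B. c (a0, b) * gabor_atom p d g a0 b y)"
      proof -
        have "(\<Sum>a\<in>A. \<Sum>b\<in>B. c (a, b) * gabor_atom p d g a b y)
          = (\<Sum>b\<in>B. c (a0, b) * gabor_atom p d g a0 b y) + (\<Sum>a\<in>A - {a0}. \<Sum>b\<in>B. c (a, b) * gabor_atom p d g a b y)"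
          using fA a0 by (simp add: sum.remove)
        moreover have "(\<Sum>a\<in>A - {a0}. \<Sum>b\<in>B. c (a, b) * gabor_atom p d g a b y) = 0"
        proof (rule sum.neutral, rule ballI)
          fix a assume a: "a \<in> A - {a0}"
          have "vsub p y a \<notin> E" using tile_unique[OF H3 fA y _ a0 _ e0, of a] a by auto
          hence "g (vsub p y a) = 0" using gz vsub_Z[OF p y] a AZ by blast
          thus "(\<Sum>b\<in>B. c (a, b) * gabor_atom p d g a b y) = 0" by (simp add: gabor_atom_def)
        qed
        ultimately show ?thesis by simp
      qed
      also have "\<dots> = g x * (\<Sum>b\<in>B. C a0 b * chi p (dotp d x b))"
        unfolding sum_distrib_left
      proof (rule sum.cong[OF refl])
        fix b
        have "c (a0, b) * gabor_atom p d g a0 b y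
            = g x * (C a0 b * chi p (dotp d x b)) * (chi p (dotp d a0 b) * cnj (chi p (dotp d a0 b)))"
          unfolding c_def gabor_atom_def x_def[symmetric] yx chi_dot_vadd[OF p] using xE EZ by (simp add: algebra_simps vsub_vadd[of x p d a0] subsetD)
        thus "c (a0, b) * gabor_atom p d g a0 b y = g x * (C a0 b * chi p (dotp d x b))" by simp
      qed
      also have "\<dots> = f y" using C[OF xE, of a0] gnz[OF xE] yx by (simp add: field_simps)
      finally show ?thesis by simp
    qed
    thus ?thesis by blast
  qed
  show ?thesis unfolding is_onb_def using orth span by auto
qed



lemma sum_ind_card: "finite Z \<Longrightarrow> E \<subseteq> Z \<Longrightarrow> (\<Sum>x\<in>Z. indicator E x :: real) = real (card E)"
  by (simp add: sum.subset_diff[of E Z])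

lemma sum_shift_vsub:
  assumes p: "p > 0" and a: "a \<in> zp_vecs p d"
  shows "(\<Sum>y\<in>zp_vecs p d. F (vsub p y a)) = (\<Sum>x\<in>zp_vecs p d. F x)"
  by (subst sum_shift[OF p a]) (auto intro: sum.cong simp: vsub_vadd)

lemma dir_fwd:
  assumes p: "p > 0" and AZ: "A \<subseteq> zp_vecs p d" and BZ: "B \<subseteq> zp_vecs p d"
    and g1: "(\<Sum>x\<in>zp_vecs p d. (cmod (g x))\<^sup>2) = 1"
    and Edef: "E = {x \<in> zp_vecs p d. g x \<noteq> 0}" and cEB: "card E = card B"
    and ONB: "is_onb (zp_vecs p d) (A \<times> B) (\<lambda>(a, b). gabor_atom p d g a b)"
  shows "(\<forall>x\<in>zp_vecs p d. cmod (g x) = (if x \<in> E then 1 / sqrt (real (card E)) else 0))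
           \<and> spectral_pair p d E B \<and> tiling_pair p d E A"
proof -
  let ?Z = "zp_vecs p d"
  let ?G = "\<lambda>(a, b). gabor_atom p d g a b"
  have fZ: "finite ?Z" by (rule zp_finite)
  have fA: "finite A" using AZ fZ finite_subset by blast
  have fB: "finite B" using BZ fZ finite_subset by blast
  have fAB: "finite (A \<times> B)" using fA fB by simp
  have EZ: "E \<subseteq> ?Z" using Edef by auto
  have fE: "finite E" using EZ fZ finite_subset by blast
  have gz: "\<And>x. x \<in> ?Z \<Longrightarrow> x \<notin> E \<Longrightarrow> g x = 0" using Edef by auto
  have gnz: "\<And>x. x \<in> E \<Longrightarrow> g x \<noteq> 0" using Edef by auto
  have orth: "\<And>i j. i \<in> A \<times> B \<Longrightarrow> j \<in> A \<times> B \<Longrightarrow> ip ?Z (?G i) (?G j) = (if i = j then 1 else 0)"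
    and span: "\<And>f. \<exists>c. \<forall>x\<in>?Z. f x = (\<Sum>i\<in>A \<times> B. c i * ?G i x)"
    using ONB unfolding is_onb_def by blast+
  have Ene: "E \<noteq> {}"
  proof
    assume "E = {}"
    hence "\<forall>x\<in>?Z. g x = 0" using Edef by auto
    hence "(\<Sum>x\<in>?Z. (cmod (g x))\<^sup>2) = 0" by simp
    thus False using g1 by simp
  qed
  have cEpos: "card E > 0" using Ene fE by (simp add: card_gt_0_iff)
  have cBpos: "card B > 0" using cEpos cEB by simp
  have shift1: "(\<Sum>y\<in>?Z. (cmod (g (vsub p y a)))\<^sup>2) = 1" if "a \<in> A" for a
    using sum_shift_vsub[OF p, of a d "\<lambda>x. (cmod (g x))\<^sup>2"] that AZ g1 by auto
  \<comment> \<open>Parseval\<close>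
  have pars: "(\<Sum>i\<in>A \<times> B. (cmod (?G i y))\<^sup>2) = 1" if y: "y \<in> ?Z" for y
  proof -
    define f where "f = (\<lambda>x. if x = y then (1::complex) else 0)"
    obtain c where c: "\<forall>x\<in>?Z. f x = (\<Sum>i\<in>A \<times> B. c i * ?G i x)" using span by blast
    have cj: "c j = cnj (?G j y)" if j: "j \<in> A \<times> B" for j
    proof -
      have "ip ?Z f (?G j) = cnj (?G j y)"
        unfolding ip_def f_def using y fZ
        by (subst sum.cong[OF refl, of _ _ "\<lambda>x. if x = y then cnj (?G j y) else 0"]) auto
      moreover have "ip ?Z f (?G j) = c j"
      proof -
        have "ip ?Z f (?G j) = (\<Sum>x\<in>?Z. (\<Sum>i\<in>A \<times> B. c i * ?G i x) * cnj (?G j x))"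
          unfolding ip_def using c by (intro sum.cong) auto
        also have "\<dots> = (\<Sum>i\<in>A \<times> B. c i * ip ?Z (?G i) (?G j))"
          unfolding ip_def sum_distrib_right sum_distrib_left
          by (subst sum.swap) (simp add: mult.assoc)
        also have "\<dots> = (\<Sum>i\<in>A \<times> B. if i = j then c i else 0)"
          using orth j by (intro sum.cong) auto
        also have "\<dots> = c j" using j fAB by (simp add: sum.delta')
        finally show ?thesis .
      qed
      ultimately show ?thesis by simp
    qed
    have "(1::complex) = f y" unfolding f_def by simp
    also have "\<dots> = (\<Sum>i\<in>A \<times> B. cnj (?G i y) * ?G i y)" using c y cj by simp
    also have "\<dots> = of_real (\<Sum>i\<in>A \<times> B. (cmod (?G i y))\<^sup>2)"
      unfolding of_real_sum by (intro sum.cong refl) (simp only: complex_norm_square mult.commute)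
    finally have "complex_of_real (\<Sum>i\<in>A \<times> B. (cmod (?G i y))\<^sup>2) = 1" by (rule sym)
    thus ?thesis by (simp only: of_real_eq_1_iff)
  qed
  define w where "w = (\<lambda>y. \<Sum>a\<in>A. (cmod (g (vsub p y a)))\<^sup>2)"
  have Bw: "real (card B) * w y = 1" if y: "y \<in> ?Z" for y
  proof -
    have "(\<Sum>i\<in>A \<times> B. (cmod (?G i y))\<^sup>2) = (\<Sum>a\<in>A. \<Sum>b\<in>B. (cmod (g (vsub p y a)))\<^sup>2)"
      unfolding sum.cartesian_product' by (simp add: gabor_atom_def norm_mult)
    also have "\<dots> = real (card B) * w y" unfolding w_def by (simp add: sum_distrib_left)
    finally show ?thesis using pars[OF y] by simp
  qed
  have ex: "\<exists>a\<in>A. vsub p y a \<in> E" if y: "y \<in> ?Z" for y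
  proof (rule ccontr)
    assume "\<not> ?thesis"
    hence "\<forall>a\<in>A. g (vsub p y a) = 0" using gz vsub_Z[OF p y] AZ by blast
    hence "w y = 0" unfolding w_def by simp
    thus False using Bw[OF y] by simp
  qed
  define K where "K = (\<lambda>y. \<Sum>a\<in>A. indicator E (vsub p y a) :: real)"
  have K1: "K y \<ge> 1" if y: "y \<in> ?Z" for y
  proof -
    obtain a where a: "a \<in> A" "vsub p y a \<in> E" using ex[OF y] by blast
    have "indicator E (vsub p y a) \<le> K y" unfolding K_def
      by (rule member_le_sum) (use a fA in auto)
    thus ?thesis using a by simp
  qed
  have sumK: "(\<Sum>y\<in>?Z. K y) = real (card A) * real (card E)"
  proof -
    have "(\<Sum>y\<in>?Z. K y) = (\<Sum>a\<in>A. \<Sum>y\<in>?Z. indicator E (vsub p y a) :: real)"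
      unfolding K_def by (rule sum.swap)
    also have "\<dots> = (\<Sum>a\<in>A. \<Sum>x\<in>?Z. indicator E x :: real)"
    proof (rule sum.cong[OF refl])
    fix a assume "a \<in> A"
    thus "(\<Sum>y\<in>?Z. indicator E (vsub p y a) :: real) = (\<Sum>x\<in>?Z. indicator E x)"
      using sum_shift_vsub[OF p, of a d "indicator E"] AZ by auto
  qed
    also have "\<dots> = (\<Sum>a\<in>A. real (card E))"
      using sum_ind_card[OF fZ EZ] by simp
    finally show ?thesis by simp
  qed
  have cZ: "real (card ?Z) = real (card A) * real (card B)"
  proof -
    have "real (card ?Z) = (\<Sum>y\<in>?Z. real (card B) * w y)" using Bw by simp
    also have "\<dots> = real (card B) * (\<Sum>a\<in>A. \<Sum>y\<in>?Z. (cmod (g (vsub p y a)))\<^sup>2)"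
      unfolding w_def sum_distrib_left[symmetric] by (subst sum.swap) simp
    also have "\<dots> = real (card B) * real (card A)" using shift1 by simp
    finally show ?thesis by simp
  qed
  have "(\<Sum>y\<in>?Z. K y - 1) = 0"
    using sumK cZ cEB by (simp add: sum_subtractf)
  hence "\<forall>y\<in>?Z. K y - 1 = 0"
    using sum_nonneg_eq_0_iff[OF fZ, of "\<lambda>y. K y - 1"] K1 by simp
  hence T: "tiling_pair p d E A" unfolding tiling_pair_def K_def by simp
  have gval: "(cmod (g x))\<^sup>2 = 1 / real (card E)" if xE: "x \<in> E" for x
  proof -
    have xZ: "x \<in> ?Z" using xE EZ by auto
    obtain a0 where a0: "a0 \<in> A" using ex[OF xZ] by blast
    have a0Z: "a0 \<in> ?Z" using a0 AZ by auto
    define y where "y = vadd p x a0"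
    have yZ: "y \<in> ?Z" using vadd_Z[OF p xZ a0Z] y_def by simp
    have yx: "vsub p y a0 = x" using vsub_vadd[OF xZ] y_def by simp
    have "w y = (cmod (g (vsub p y a0)))\<^sup>2 + (\<Sum>a\<in>A - {a0}. (cmod (g (vsub p y a)))\<^sup>2)"
      unfolding w_def using fA a0 by (simp add: sum.remove)
    moreover have "(\<Sum>a\<in>A - {a0}. (cmod (g (vsub p y a)))\<^sup>2) = 0"
    proof (rule sum.neutral, rule ballI)
      fix a assume a: "a \<in> A - {a0}"
      have "vsub p y a \<notin> E" using tile_unique[OF T fA yZ _ a0 _, of a] a yx xE by auto
      hence "g (vsub p y a) = 0" using gz vsub_Z[OF p yZ] a AZ by blast
      thus "(cmod (g (vsub p y a)))\<^sup>2 = 0" by simp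
    qed
    ultimately have "w y = (cmod (g x))\<^sup>2" using yx by simp
    thus ?thesis using Bw[OF yZ] cEB cBpos by (simp add: field_simps)
  qed
  have I: "\<forall>x\<in>?Z. cmod (g x) = (if x \<in> E then 1 / sqrt (real (card E)) else 0)"
  proof
    fix x assume xZ: "x \<in> ?Z"
    show "cmod (g x) = (if x \<in> E then 1 / sqrt (real (card E)) else 0)"
    proof (cases "x \<in> E")
      case True
      have "cmod (g x) = sqrt ((cmod (g x))\<^sup>2)" by simp
      also have "\<dots> = sqrt (1 / real (card E))" by (simp only: gval[OF True])
      also have "\<dots> = 1 / sqrt (real (card E))" by (simp add: real_sqrt_divide)
      finally show ?thesis using True by simp
    qed (use gz xZ in simp)
  qed
  have gsq: "\<forall>x\<in>?Z. (cmod (g x))\<^sup>2 = (if x \<in> E then 1 / real (card E) else 0)"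
    using gval gz by simp
  obtain a0 where a0: "a0 \<in> A" using ex Ene EZ by blast
  have a0Z: "a0 \<in> ?Z" using a0 AZ by auto
  have S1: "\<forall>b\<in>B. ip E (\<lambda>x. chi p (dotp d x b)) (\<lambda>x. chi p (dotp d x b)) \<noteq> 0"
  proof
    fix b
    have "ip E (\<lambda>x. chi p (dotp d x b)) (\<lambda>x. chi p (dotp d x b)) = of_nat (card E)"
      unfolding ip_def by simp
    thus "ip E (\<lambda>x. chi p (dotp d x b)) (\<lambda>x. chi p (dotp d x b)) \<noteq> 0" using cEpos by simp
  qed
  have S2: "\<forall>b\<in>B. \<forall>b'\<in>B. b \<noteq> b' \<longrightarrow> ip E (\<lambda>x. chi p (dotp d x b)) (\<lambda>x. chi p (dotp d x b')) = 0"
  proof (intro ballI impI)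
    fix b b' assume b: "b \<in> B" and b': "b' \<in> B" and ne: "b \<noteq> b'"
    have "ip ?Z (?G (a0, b)) (?G (a0, b')) = 0" using orth[of "(a0, b)" "(a0, b')"] a0 b b' ne by simp
    hence "(chi p (dotp d a0 b) * cnj (chi p (dotp d a0 b'))) * of_real (1 / real (card E)) *
       ip E (\<lambda>x. chi p (dotp d x b)) (\<lambda>x. chi p (dotp d x b')) = 0"
      using L_ip[OF p a0Z EZ gsq, of b b'] by simp
    moreover have "chi p (dotp d a0 b) \<noteq> 0" using cmod_chi[of p "dotp d a0 b"] by (auto simp del: cmod_chi)
    moreover have "cnj (chi p (dotp d a0 b')) \<noteq> 0" using cmod_chi[of p "dotp d a0 b'"] by (auto simp del: cmod_chi)
    ultimately show "ip E (\<lambda>x. chi p (dotp d x b)) (\<lambda>x. chi p (dotp d x b')) = 0"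
      using cEpos by simp
  qed
  have S3: "\<exists>c. \<forall>x\<in>E. f x = (\<Sum>b\<in>B. c b * chi p (dotp d x b))" for f
  proof -
    obtain c where c: "\<forall>y\<in>?Z. g (vsub p y a0) * f (vsub p y a0) = (\<Sum>i\<in>A \<times> B. c i * ?G i y)"
      using span[of "\<lambda>y. g (vsub p y a0) * f (vsub p y a0)"] by blast
    have "f x = (\<Sum>b\<in>B. (c (a0, b) * chi p (dotp d a0 b)) * chi p (dotp d x b))" if xE: "x \<in> E" for x
    proof -
      have xZ: "x \<in> ?Z" using xE EZ by auto
      define y where "y = vadd p x a0"
      have yZ: "y \<in> ?Z" using vadd_Z[OF p xZ a0Z] y_def by simp
      have yx: "vsub p y a0 = x" using vsub_vadd[OF xZ] y_def by simp
      have "g (vsub p y a0) * f (vsub p y a0) = (\<Sum>i\<in>A \<times> B. c i * ?G i y)" using c yZ by blast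
      hence "g x * f x = (\<Sum>i\<in>A \<times> B. c i * ?G i y)" unfolding yx .
      also have "\<dots> = (\<Sum>a\<in>A. \<Sum>b\<in>B. c (a, b) * gabor_atom p d g a b y)"
        by (simp add: sum.cartesian_product split_def)
      also have "\<dots> = (\<Sum>b\<in>B. c (a0, b) * gabor_atom p d g a0 b y)"
      proof -
        have "(\<Sum>a\<in>A. \<Sum>b\<in>B. c (a, b) * gabor_atom p d g a b y)
          = (\<Sum>b\<in>B. c (a0, b) * gabor_atom p d g a0 b y) + (\<Sum>a\<in>A - {a0}. \<Sum>b\<in>B. c (a, b) * gabor_atom p d g a b y)"
          using fA a0 by (simp add: sum.remove)
        moreover have "(\<Sum>a\<in>A - {a0}. \<Sum>b\<in>B. c (a, b) * gabor_atom p d g a b y) = 0"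
        proof (rule sum.neutral, rule ballI)
          fix a assume a: "a \<in> A - {a0}"
          have "vsub p y a \<notin> E" using tile_unique[OF T fA yZ _ a0 _, of a] a yx xE by auto
          hence "g (vsub p y a) = 0" using gz vsub_Z[OF p yZ] a AZ by blast
          thus "(\<Sum>b\<in>B. c (a, b) * gabor_atom p d g a b y) = 0" by (simp add: gabor_atom_def)
        qed
        ultimately show ?thesis by simp
      qed
      also have "\<dots> = g x * (\<Sum>b\<in>B. (c (a0, b) * chi p (dotp d a0 b)) * chi p (dotp d x b))"
        unfolding sum_distrib_left gabor_atom_def yx
        by (intro sum.cong refl) (simp add: y_def chi_dot_vadd[OF p] algebra_simps)
      finally show ?thesis using gnz[OF xE] by simp
    qed
    thus ?thesis by (intro exI[of _ "\<lambda>b. c (a0, b) * chi p (dotp d a0 b)"] ballI) simp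
  qed
  have "spectral_pair p d E B"
    unfolding spectral_pair_def is_ob_def using S1 S2 S3 by blast
  with I T show ?thesis by blast
qed


theorem theorem1p3:
  fixes p d :: nat and g :: "(nat \<Rightarrow> int) \<Rightarrow> complex" and A B E :: "(nat \<Rightarrow> int) set"
  assumes "prime p" and "d \<ge> 1"
    and "A \<subseteq> zp_vecs p d" and "B \<subseteq> zp_vecs p d"
    and "(\<Sum>x\<in>zp_vecs p d. (cmod (g x))\<^sup>2) = 1"
    and "E = {x \<in> zp_vecs p d. g x \<noteq> 0}"
    and "card E = card B"
  shows "is_onb (zp_vecs p d) (A \<times> B) (\<lambda>(a, b). gabor_atom p d g a b) \<longleftrightarrow>
           (\<forall>x\<in>zp_vecs p d. cmod (g x) = (if x \<in> E then 1 / sqrt (real (card E)) else 0))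
           \<and> spectral_pair p d E B
           \<and> tiling_pair p d E A"
proof -
  have p: "p > 0" using assms(1) prime_gt_0_nat by blast
  have Ene: "E \<noteq> {}"
  proof
    assume "E = {}"
    hence "\<forall>x\<in>zp_vecs p d. g x = 0" using assms(6) by auto
    hence "(\<Sum>x\<in>zp_vecs p d. (cmod (g x))\<^sup>2) = 0" by simp
    thus False using assms(5) by simp
  qed
  have fE: "finite E" using assms(6) zp_finite[of p d] by simp
  have cE: "card E > 0" using Ene fE by (simp add: card_gt_0_iff)
  show ?thesis
    using dir_fwd[OF p assms(3,4,5,6,7)] dir_back[OF p assms(3,4,6) cE] by blast
qed

end
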